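(* Let $n\ge1$, $\nu\ge1$ be integers and $\delta\in\{0,1,2\}$. Then: (1) If $[\vec a]$ is a vertex of $\mathcal{O}^{(2\nu+\delta)}_{2^n}$, then $|\{[\vec b]\in\mathcal{V}(\mathcal{O}^{(2\nu+\delta)}_{2^n}):[\pi(\vec a)]=[\pi(\vec b)]\}|=2^{(n-1)(2\nu+\delta-2)}$. (2) $[\vec a]$ and $[\vec b]$ are adjacent vertices in $\mathcal{O}^{(2\nu+\delta)}_{2^n}$ if and only if $[\pi(\vec a)]$ and $[\pi(\vec b)]$ are adjacent vertices in $\mathcal{O}^{(2\nu+\delta)}_{2}$. (3) If $[\pi(\vec a)]$ and $[\pi(\vec b)]$ are adjacent vertices in $\mathcal{O}^{(2\nu+\delta)}_{2}$, then $[\vec a+\vec m_1]$ and $[\vec b+\vec m_2]$ are adjacent vertices in $\mathcal{O}^{(2\nu+\delta)}_{2^n}$ for all $\vec m_1,\vec m_2\in(2\mathbb{Z}_{2^n})^{2\nu+\delta}$ such that $(\vec a+\vec m_1)G_{2\nu+\delta,\Delta}(\vec a+\vec m_1)^t=(\vec b+\vec m_2)G_{2\nu+\delta,\Delta}(\vec b+\vec m_2)^t=0$.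
   Context: Let $V^{2\nu+\delta}$ be the set of tuples $\vec a=(a_1,\ldots,a_{2\nu+\delta})\in(\mathbb{Z}_{2^n})^{2\nu+\delta}$ such that some $a_i$ is a unit of $\mathbb{Z}_{2^n}$. Write $\vec a\sim\vec b$ if $\vec a=\lambda\vec b$ for some $\lambda\in\mathbb{Z}_{2^n}^\times$, let $[\vec a]$ denote the equivalence class and $V^{2\nu+\delta}_\sim$ the set of classes. Let $G_{2\nu+\delta,\Delta}=\begin{pmatrix}0&I_\nu&\\ &0&\\ &&\Delta\end{pmatrix}$ over $\mathbb{Z}_{2^n}$ (first two block sizes $\nu$, unspecified blocks zero), where $\Delta$ is empty if $\delta=0$, $\Delta=(1)$ if $\delta=1$, and $\Delta=\begin{pmatrix}z&1\\0&z\end{pmatrix}$ if $\delta=2$, with $z$ a fixed unit of $\mathbb{Z}_{2^n}$. The orthogonal graph $\mathcal{O}^{(2\nu+\delta)}_{2^n}$ has vertex set $\mathcal{V}(\mathcal{O}^{(2\nu+\delta)}_{2^n})=\{[\vec a]\in V^{2\nu+\delta}_\sim:\vec a\,G_{2\nu+\delta,\Delta}\,\vec a^t=0\}$, with $[\vec a]$ adjacent to $[\vec b]$ iff $\vec a(G_{2\nu+\delta,\Delta}+G_{2\nu+\delta,\Delta}^t)\vec b^t\in\mathbb{Z}_{2^n}^\times$. $\mathcal{O}^{(2\nu+\delta)}_{2}$ denotes the same construction with $n=1$ (using the reduction of $G_{2\nu+\delta,\Delta}$ mod $2$). $\pi:\mathbb{Z}_{2^n}\to\mathbb{Z}_2$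 is reduction mod $2$, applied componentwise to tuples. *)

theory Defs
  imports Main "HOL-Computational_Algebra.Primes"
begin

text \<open>Elements of Z_q are represented by integers in {0..<q}; tuples of length N
  by functions nat => int that are zero outside the index range {0..<N}.\<close>

definition vecs :: "int \<Rightarrow> nat \<Rightarrow> (nat \<Rightarrow> int) set" where
  "vecs q N = {a. (\<forall>i<N. 0 \<le> a i \<and> a i < q) \<and> (\<forall>i. N \<le> i \<longrightarrow> a i = 0)}"

definition units_mod :: "int \<Rightarrow> int set" where
  "units_mod q = {u. 0 \<le> u \<and> u < q \<and> coprime u q}"

definition Vset :: "int \<Rightarrow> nat \<Rightarrow> (nat \<Rightarrow> int) set" where
  "Vset q N = {a \<in> vecs q N. \<exists>i<N. coprime (a i) q}"

definition smult :: "int \<Rightarrow> int \<Rightarrow> (nat \<Rightarrow> int) \<Rightarrow> (nat \<Rightarrow> int)" where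
  "smult q c a = (\<lambda>i. (c * a i) mod q)"

definition vadd :: "int \<Rightarrow> (nat \<Rightarrow> int) \<Rightarrow> (nat \<Rightarrow> int) \<Rightarrow> (nat \<Rightarrow> int)" where
  "vadd q a b = (\<lambda>i. (a i + b i) mod q)"

definition cls :: "int \<Rightarrow> nat \<Rightarrow> (nat \<Rightarrow> int) \<Rightarrow> (nat \<Rightarrow> int) set" where
  "cls q N a = {b \<in> Vset q N. \<exists>c \<in> units_mod q. a = smult q c b}"

definition pi2 :: "(nat \<Rightarrow> int) \<Rightarrow> (nat \<Rightarrow> int)" where
  "pi2 a = (\<lambda>i. a i mod 2)"

definition evens :: "int \<Rightarrow> nat \<Rightarrow> (nat \<Rightarrow> int) set" where
  "evens q N = {m \<in> vecs q N. \<forall>i<N. even (m i)}"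

text \<open>The matrix G_{2nu+delta,Delta} (integer entries; reduced mod q when used),
  indices 0-based.\<close>
definition Gmat :: "nat \<Rightarrow> nat \<Rightarrow> int \<Rightarrow> nat \<Rightarrow> nat \<Rightarrow> int" where
  "Gmat nu delta z i j =
     (if i < nu \<and> j = nu + i then 1
      else if delta = 1 \<and> i = 2*nu \<and> j = 2*nu then 1
      else if delta = 2 \<and> i = 2*nu \<and> j = 2*nu then z
      else if delta = 2 \<and> i = 2*nu + 1 \<and> j = 2*nu + 1 then z
      else if delta = 2 \<and> i = 2*nu \<and> j = 2*nu + 1 then 1
      else 0)"

definition form :: "int \<Rightarrow> nat \<Rightarrow> (nat \<Rightarrow> nat \<Rightarrow> int) \<Rightarrow> (nat \<Rightarrow> int) \<Rightarrow> (nat \<Rightarrow> int) \<Rightarrow> int" where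
  "form q N M a b = (\<Sum>i<N. \<Sum>j<N. a i * M i j * b j) mod q"

definition verts :: "int \<Rightarrow> nat \<Rightarrow> (nat \<Rightarrow> nat \<Rightarrow> int) \<Rightarrow> (nat \<Rightarrow> int) set set" where
  "verts q N G = {cls q N a | a. a \<in> Vset q N \<and> form q N G a a = 0}"

definition adjacent :: "int \<Rightarrow> nat \<Rightarrow> (nat \<Rightarrow> nat \<Rightarrow> int) \<Rightarrow> (nat \<Rightarrow> int) set \<Rightarrow> (nat \<Rightarrow> int) set \<Rightarrow> bool" where
  "adjacent q N G A B \<longleftrightarrow> A \<in> verts q N G \<and> B \<in> verts q N G \<and>
     (\<exists>a\<in>A. \<exists>b\<in>B. coprime (form q N (\<lambda>i j. G i j + G j i) a b) q)"

end

theory Submission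
  imports Defs "HOL-Number_Theory.Cong" "HOL-Library.FuncSet"
begin


definition sf :: "nat \<Rightarrow> (nat \<Rightarrow> nat \<Rightarrow> int) \<Rightarrow> (nat \<Rightarrow> int) \<Rightarrow> (nat \<Rightarrow> int) \<Rightarrow> int" where
  "sf N M a b = (\<Sum>i<N. \<Sum>j<N. a i * M i j * b j)"

lemma form_sf: "form q N M a b = sf N M a b mod q" by (simp add: form_def sf_def)

lemma sf_cong:
  assumes "\<forall>i<N. [x i = x' i] (mod m)" "\<forall>j<N. [y j = y' j] (mod m)"
  shows "[sf N M x y = sf N M x' y'] (mod m)"
  unfolding sf_def
  by (intro cong_sum cong_mult cong_refl) (use assms in auto)

lemma sf_scale: "sf N M (\<lambda>i. c * x i) (\<lambda>j. d * y j) = c * d * sf N M x y"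
  unfolding sf_def by (simp add: sum_distrib_left algebra_simps)

lemma sf_smult: "sf N M (smult q c x) (smult q d y) mod q = (c * d * sf N M x y) mod q"
proof -
  have "[sf N M (smult q c x) (smult q d y) = sf N M (\<lambda>i. c * x i) (\<lambda>j. d * y j)] (mod q)"
    by (rule sf_cong) (auto simp: smult_def cong_def)
  then show ?thesis by (simp add: sf_scale cong_def)
qed

lemma units_mult: "c \<in> units_mod q \<Longrightarrow> e \<in> units_mod q \<Longrightarrow> (c * e) mod q \<in> units_mod q"
  unfolding units_mod_def by auto

lemma units_inv: assumes "c \<in> units_mod q" "q > 1" shows "\<exists>d\<in>units_mod q. (d * c) mod q = 1"
proof -
  from assms have "coprime c q" by (simp add: units_mod_def)
  then obtain x where x: "[c * x = 1] (mod q)" using cong_solve_coprime_int by blast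
  have "coprime (c * x) q"
    using cong_imp_coprime[OF cong_sym[OF x]] by simp
  then have "coprime x q" by simp
  moreover have "(x mod q * c) mod q = 1" using x assms(2)
    by (simp add: cong_def) (metis mod_mult_left_eq mult.commute)
  ultimately show ?thesis using assms(2) unfolding units_mod_def
    by (intro bexI[of _ "x mod q"]) auto
qed

lemma smult_mod: "smult q (c mod q) x = smult q c x"
  unfolding smult_def by (simp add: mod_mult_left_eq)

lemma smult_smult: "smult q c (smult q d a) = smult q (c * d) a"
  unfolding smult_def by (simp add: mod_mult_right_eq mult.assoc)

lemma smult_1: "a \<in> vecs q N \<Longrightarrow> smult q 1 a = a"
  unfolding smult_def vecs_def
proof (rule ext)
  fix i assume a: "a \<in> {a. (\<forall>i<N. 0 \<le> a i \<and> a i < q) \<and> (\<forall>i. N \<le> i \<longrightarrow> a i = 0)}"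
  show "1 * a i mod q = a i"
  proof (cases "i < N")
    case True then show ?thesis using a by simp
  next
    case False then show ?thesis using a by simp
  qed
qed

lemma one_unit: "q > 1 \<Longrightarrow> 1 \<in> units_mod q" by (simp add: units_mod_def)

lemma self_cls: "a \<in> Vset q N \<Longrightarrow> q > 1 \<Longrightarrow> a \<in> cls q N a"
  unfolding cls_def using smult_1[of a q N] one_unit[of q] by (auto simp: Vset_def intro!: bexI[of _ 1])

lemma smult_Vset: assumes "a \<in> Vset q N" "c \<in> units_mod q" "q > 1"
  shows "smult q c a \<in> Vset q N"
proof -
  from assms(1) obtain i where i: "i < N" "coprime (a i) q" by (auto simp: Vset_def)
  have "coprime (smult q c a i) q" using i assms(2) by (simp add: smult_def units_mod_def)
  moreover have "smult q c a \<in> vecs q N" using assms by (auto simp: vecs_def Vset_def smult_def)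
  ultimately show ?thesis using i unfolding Vset_def by auto
qed

lemma cls_sym: assumes "b \<in> cls q N a" "q > 1"
  shows "a \<in> Vset q N \<and> (\<exists>d\<in>units_mod q. b = smult q d a)"
proof -
  from assms obtain c where c: "c \<in> units_mod q" "a = smult q c b" and b: "b \<in> Vset q N"
    by (auto simp: cls_def)
  obtain d where d: "d \<in> units_mod q" "(d * c) mod q = 1" using units_inv[OF c(1) assms(2)] by blast
  have "smult q d a = b" using c d b
  proof -
    have "smult q d a = smult q ((d * c) mod q) b" using c by (simp add: smult_smult smult_mod)
    also have "\<dots> = b" using d b smult_1[of b q N] by (simp add: Vset_def)
    finally show ?thesis .
  qed
  then have "b = smult q d a" by simp
  moreover have "a \<in> Vset q N" using smult_Vset[OF b c(1) assms(2)] c(2) by simp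
  ultimately show ?thesis using d(1) by blast
qed

lemma cls_eq: assumes "b \<in> cls q N a" "q > 1" shows "cls q N b = cls q N a"
proof -
  from assms obtain c where c: "c \<in> units_mod q" "a = smult q c b" by (auto simp: cls_def)
  from cls_sym[OF assms] obtain d where d: "d \<in> units_mod q" "b = smult q d a" by blast
  show ?thesis
  proof (intro equalityI subsetI)
    fix x assume "x \<in> cls q N b"
    then obtain e where e: "e \<in> units_mod q" "b = smult q e x" "x \<in> Vset q N" by (auto simp: cls_def)
    have "a = smult q ((c * e) mod q) x" using c e by (simp add: smult_mod smult_smult)
    then show "x \<in> cls q N a" using e units_mult[OF c(1) e(1)] by (auto simp: cls_def)
  next
    fix x assume "x \<in> cls q N a"
    then obtain e where e: "e \<in> units_mod q" "a = smult q e x" "x \<in> Vset q N" by (auto simp: cls_def)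
    have "b = smult q ((d * e) mod q) x" using d e by (simp add: smult_mod smult_smult)
    then show "x \<in> cls q N b" using e units_mult[OF d(1) e(1)] by (auto simp: cls_def)
  qed
qed

lemma vert_props: assumes "cls q N a \<in> verts q N G" "q > 1"
  shows "a \<in> Vset q N \<and> sf N G a a mod q = 0"
proof -
  from assms obtain x where x: "x \<in> Vset q N" "form q N G x x = 0" "cls q N a = cls q N x"
    by (auto simp: verts_def)
  have "x \<in> cls q N a" using x self_cls assms(2) by auto
  then obtain c where c: "a = smult q c x" by (auto simp: cls_def)
  have "sf N G a a mod q = (c * c * sf N G x x) mod q" using c sf_smult by simp
  also have "\<dots> = c * c * (sf N G x x mod q) mod q" by (simp add: mod_mult_right_eq)
  also have "\<dots> = 0" using x(2) by (simp add: form_sf)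
  finally show ?thesis using cls_sym[OF \<open>x \<in> cls q N a\<close> assms(2)] by auto
qed

lemma verts_I: "x \<in> Vset q N \<Longrightarrow> sf N G x x mod q = 0 \<Longrightarrow> cls q N x \<in> verts q N G"
  unfolding verts_def form_sf by auto

lemma units2: "units_mod 2 = {1}"
  unfolding units_mod_def by (rule set_eqI) (simp, presburger)

lemma cls2: assumes "x \<in> Vset 2 N" shows "cls 2 N x = {x}"
  using assms smult_1[of _ 2 N] unfolding cls_def units2 Vset_def by auto

lemma coprime_pow2: "n \<ge> 1 \<Longrightarrow> coprime (x::int) (2 ^ n) \<longleftrightarrow> odd x"
  by simp

lemma two_dvd_pow: "n \<ge> 1 \<Longrightarrow> (2::int) dvd 2 ^ n"
  by (cases n) auto

lemma mod2_pow: "n \<ge> 1 \<Longrightarrow> (x::int) mod 2 ^ n mod 2 = x mod 2"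
  by (rule mod_mod_cancel) (rule two_dvd_pow)

lemma odd_mod_pow: "n \<ge> 1 \<Longrightarrow> odd ((x::int) mod 2 ^ n) \<longleftrightarrow> odd x"
  using mod2_pow[of n x] by (simp add: odd_iff_mod_2_eq_one)

lemma coprime_mod_pow2: "n \<ge> 1 \<Longrightarrow> coprime ((x::int) mod 2 ^ n) (2 ^ n) \<longleftrightarrow> odd x"
  using odd_mod_pow[of n x] by simp

definition E :: "nat \<Rightarrow> nat \<Rightarrow> nat \<Rightarrow> nat \<Rightarrow> int" where
  "E s t i j = (if i = s \<and> j = t then 1 else 0)"

lemma sf_E: assumes "s < N" "t < N" shows "sf N (E s t) x x = x s * x t"
proof -
  have "sf N (E s t) x x = (\<Sum>i<N. if i = s then x i * x t else 0)"
    unfolding sf_def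
  proof (rule sum.cong[OF refl])
    fix i assume "i \<in> {..<N}"
    have "(\<Sum>j<N. x i * E s t i j * x j) = (\<Sum>j<N. if j = t then (if i = s then x i * x j else 0) else 0)"
      by (rule sum.cong) (auto simp: E_def)
    also have "\<dots> = (if i = s then x i * x t else 0)" using assms by simp
    finally show "(\<Sum>j<N. x i * E s t i j * x j) = (if i = s then x i * x t else 0)" .
  qed
  also have "\<dots> = x s * x t" using assms by simp
  finally show ?thesis .
qed

lemma sf_add: "sf N (\<lambda>i j. A i j + B i j) x y = sf N A x y + sf N B x y"
  unfolding sf_def by (simp add: algebra_simps sum.distrib)

lemma sf_cmult: "sf N (\<lambda>i j. c * A i j) x y = c * sf N A x y"
  unfolding sf_def by (simp add: algebra_simps sum_distrib_left)

lemma sf_zero: "sf N (\<lambda>i j. 0) x y = 0"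
  unfolding sf_def by simp

lemma sf_if: "sf N (\<lambda>i j. if P then A i j else 0) x y = (if P then sf N A x y else 0)"
  by (cases P) (simp_all add: sf_zero)

lemma sf_sum: "finite S \<Longrightarrow> sf N (\<lambda>i j. \<Sum>s\<in>S. A s i j) x y = (\<Sum>s\<in>S. sf N (A s) x y)"
proof (induction S rule: finite_induct)
  case empty then show ?case by (simp add: sf_zero)
next
  case (insert s S)
  then show ?case using sf_add[of N "A s" "\<lambda>i j. \<Sum>s\<in>S. A s i j" x y] by simp
qed

lemma Gmat_decomp: "Gmat nu delta z = (\<lambda>i j. (\<Sum>s<nu. E s (nu+s) i j)
   + (if delta = 1 then E (2*nu) (2*nu) i j else 0)
   + (if delta = 2 then z * E (2*nu) (2*nu) i j + E (2*nu) (2*nu+1) i j + z * E (2*nu+1) (2*nu+1) i j else 0))"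
proof (intro ext)
  fix i j
  have s: "(\<Sum>s<nu. E s (nu+s) i j) = (if i < nu \<and> j = nu + i then 1 else 0)"
  proof -
    have "(\<Sum>s<nu. E s (nu+s) i j) = (\<Sum>s<nu. if s = i then (if j = nu + i then 1 else 0) else 0)"
      by (rule sum.cong) (auto simp: E_def)
    also have "\<dots> = (if i < nu \<and> j = nu + i then 1 else 0)" by simp
    finally show ?thesis .
  qed
  show "Gmat nu delta z i j = (\<Sum>s<nu. E s (nu+s) i j)
   + (if delta = 1 then E (2*nu) (2*nu) i j else 0)
   + (if delta = 2 then z * E (2*nu) (2*nu) i j + E (2*nu) (2*nu+1) i j + z * E (2*nu+1) (2*nu+1) i j else 0)"
    unfolding s by (auto simp: Gmat_def E_def)
qed

definition Qc :: "nat \<Rightarrow> nat \<Rightarrow> int \<Rightarrow> (nat \<Rightarrow> int) \<Rightarrow> int" where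
  "Qc nu delta z x = (\<Sum>s<nu. x s * x (nu+s))
    + (if delta = 1 then x (2*nu) * x (2*nu) else 0)
    + (if delta = 2 then z * (x (2*nu) * x (2*nu)) + x (2*nu) * x (2*nu+1) + z * (x (2*nu+1) * x (2*nu+1)) else 0)"

lemma sf_Gmat: assumes "delta \<in> {0,1,2}" "N = 2*nu + delta"
  shows "sf N (Gmat nu delta z) x x = Qc nu delta z x"
proof -
  have "sf N (Gmat nu delta z) x x = (\<Sum>s<nu. sf N (E s (nu+s)) x x)
    + (if delta = 1 then sf N (E (2*nu) (2*nu)) x x else 0)
    + (if delta = 2 then z * sf N (E (2*nu) (2*nu)) x x + sf N (E (2*nu) (2*nu+1)) x x
        + z * sf N (E (2*nu+1) (2*nu+1)) x x else 0)"
    unfolding Gmat_decomp by (simp only: sf_add sf_if sf_cmult sf_sum[OF finite_lessThan])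
  also have "\<dots> = Qc nu delta z x"
    unfolding Qc_def using assms by (auto simp: sf_E intro!: sum.cong)
  finally show ?thesis .
qed

lemma Qc_upd: assumes "k < 2*nu" "j = (if k < nu then nu + k else k - nu)"
  shows "Qc nu delta z (x(k:=t)) = t * x j + Qc nu delta z (x(k:=0))"
proof -
  have d: "Qc nu delta z y = (\<Sum>s<nu. y s * y (nu+s)) + (if delta = 1 then y (2*nu) * y (2*nu) else 0)
    + (if delta = 2 then z * (y (2*nu) * y (2*nu)) + y (2*nu) * y (2*nu+1) + z * (y (2*nu+1) * y (2*nu+1)) else 0)"
    for y by (simp add: Qc_def)
  have e1: "(x(k:=t)) (2*nu) = x (2*nu)" "(x(k:=t)) (2*nu+1) = x (2*nu+1)"
    "(x(k:=0)) (2*nu) = x (2*nu)" "(x(k:=0)) (2*nu+1) = x (2*nu+1)" using assms(1) by auto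
  have S: "(\<Sum>s<nu. (x(k:=u)) s * (x(k:=u)) (nu+s)) = u * x j + (\<Sum>s\<in>{..<nu} - {k mod nu}. x s * x (nu+s))" for u
  proof (cases "k < nu")
    case True
    then have "(\<Sum>s<nu. (x(k:=u)) s * (x(k:=u)) (nu+s)) = (x(k:=u)) k * (x(k:=u)) (nu+k) + (\<Sum>s\<in>{..<nu} - {k}. (x(k:=u)) s * (x(k:=u)) (nu+s))"
      by (subst sum.remove[of _ k]) auto
    also have "(\<Sum>s\<in>{..<nu} - {k}. (x(k:=u)) s * (x(k:=u)) (nu+s)) = (\<Sum>s\<in>{..<nu} - {k}. x s * x (nu+s))"
      using True by (intro sum.cong) auto
    finally show ?thesis using True assms(2) by simp
  next
    case False
    define k0 where "k0 = k - nu"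
    have k0a: "k0 < nu" "k = nu + k0" using False assms(1) by (auto simp: k0_def)
    have "k mod nu = (k - nu) mod nu" using False by (simp add: le_mod_geq)
    then have "k mod nu = k0" using k0a(1) unfolding k0_def by simp
    then have k0: "k0 < nu" "k = nu + k0" "k mod nu = k0" using k0a by blast+
    have "(\<Sum>s<nu. (x(k:=u)) s * (x(k:=u)) (nu+s)) = (x(k:=u)) k0 * (x(k:=u)) (nu+k0) + (\<Sum>s\<in>{..<nu} - {k0}. (x(k:=u)) s * (x(k:=u)) (nu+s))"
      using k0(1,2) by (subst sum.remove[of _ k0]) simp_all
    also have "(\<Sum>s\<in>{..<nu} - {k0}. (x(k:=u)) s * (x(k:=u)) (nu+s)) = (\<Sum>s\<in>{..<nu} - {k0}. x s * x (nu+s))"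
      using k0(1,2) by (intro sum.cong) simp_all
    moreover have "j = k0" using False assms(2) k0(2) by simp
    ultimately show ?thesis using k0 by simp
  qed
  show ?thesis unfolding d e1 S by simp
qed

lemma odd_index: assumes "delta \<in> {0,1,2}" "N = 2*nu + delta" "odd z"
  "\<exists>i<N. odd (a i)" "even (Qc nu delta z a)"
  shows "\<exists>j<2*nu. odd (a j)"
proof (rule ccontr)
  assume "\<not> ?thesis"
  then have ev: "\<And>j. j < 2*nu \<Longrightarrow> even (a j)" by auto
  have "even (\<Sum>s<nu. a s * a (nu+s))"
    by (rule dvd_sum) (use ev in auto)
  moreover obtain i where i: "i < N" "odd (a i)" using assms(4) by auto
  moreover have "i \<ge> 2*nu" using ev[of i] i by (cases "i < 2*nu") auto
  ultimately show False using assms(1,2,3,5)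
  proof (elim insertE)
    assume "delta = 0" then show False using i assms(2) \<open>i \<ge> 2*nu\<close> by simp
  next
    assume "delta = 1"
    moreover have "i = 2*nu" using i assms(2) \<open>i \<ge> 2*nu\<close> \<open>delta = 1\<close> by simp
    ultimately show False using i assms(5) \<open>even (\<Sum>s<nu. a s * a (nu+s))\<close> by (simp add: Qc_def)
  next
    assume d2: "delta \<in> {}" then show False by simp
  next
    assume d2: "delta = 2"
    then have "i = 2*nu \<or> i = 2*nu+1" using i assms(2) \<open>i \<ge> 2*nu\<close> by auto
    moreover have "even (z * (a (2 * nu) * a (2 * nu)) + a (2 * nu) * a (2 * nu + 1) + z * (a (2 * nu + 1) * a (2 * nu + 1)))"
      using assms(5) d2 \<open>even (\<Sum>s<nu. a s * a (nu+s))\<close> by (simp add: Qc_def)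
    ultimately show False using i(2) assms(3)
      by (elim disjE) (simp_all add: even_add even_mult_iff)
  qed
qed

lemma pi2_Vset: assumes "n \<ge> 1" "a \<in> Vset (2^n) N" shows "pi2 a \<in> Vset 2 N"
  using assms unfolding Vset_def vecs_def pi2_def by auto

lemma pi2_Vset_rev: assumes "n \<ge> 1" "a \<in> vecs (2^n) N" "pi2 a \<in> Vset 2 N"
  shows "a \<in> Vset (2^n) N"
  using assms unfolding Vset_def pi2_def by auto

lemma sf_pi2: "[sf N M (pi2 a) (pi2 b) = sf N M a b] (mod 2)"
  by (rule sf_cong) (auto simp: pi2_def cong_def)

lemma odd_mul_mod2: "odd (d::int) \<Longrightarrow> (d * w) mod 2 = w mod 2"
  by (metis mod_mult_left_eq odd_iff_mod_2_eq_one mult_1)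

lemma verts2: assumes "n \<ge> 1" "a \<in> Vset (2^n) N" "sf N G a a mod 2^n = 0"
  shows "cls 2 N (pi2 a) \<in> verts 2 N G"
proof (rule verts_I)
  show "pi2 a \<in> Vset 2 N" using pi2_Vset assms by blast
  have "sf N G (pi2 a) (pi2 a) mod 2 = sf N G a a mod 2" using sf_pi2 by (simp add: cong_def)
  also have "\<dots> = sf N G a a mod 2^n mod 2" using mod2_pow[OF assms(1)] by simp
  finally show "sf N G (pi2 a) (pi2 a) mod 2 = 0" using assms(3) by simp
qed

lemma card_res0: assumes "(m::int) > 0" "r \<in> {0,1}"
  shows "card {t::int. 0 \<le> t \<and> t < 2*m \<and> t mod 2 = r} = nat m"
proof -
  have "{t::int. 0 \<le> t \<and> t < 2*m \<and> t mod 2 = r} = (\<lambda>s. 2*s + r) ` {0..<m}"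
  proof (intro equalityI subsetI)
    fix t assume t: "t \<in> {t::int. 0 \<le> t \<and> t < 2*m \<and> t mod 2 = r}"
    have e: "t div 2 * 2 + t mod 2 = t" by (rule div_mult_mod_eq)
    have "t mod 2 = r" using t by simp
    then have "t = 2 * (t div 2) + r" using e by linarith
    moreover have "t div 2 \<in> {0..<m}" using t e by auto
    ultimately show "t \<in> (\<lambda>s. 2*s + r) ` {0..<m}" by blast
  next
    fix t assume "t \<in> (\<lambda>s. 2*s + r) ` {0..<m}"
    then obtain s where s: "0 \<le> s" "s < m" "t = 2*s + r" by auto
    then show "t \<in> {t::int. 0 \<le> t \<and> t < 2*m \<and> t mod 2 = r}" using assms(2) by auto
  qed
  moreover have "inj_on (\<lambda>s::int. 2*s + r) {0..<m}" by (rule inj_onI) simp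
  ultimately show ?thesis by (simp add: card_image)
qed

lemma card_res: assumes "n \<ge> 1" "r \<in> {0,1}"
  shows "card {t::int. 0 \<le> t \<and> t < 2^n \<and> t mod 2 = r} = 2^(n-1)"
proof -
  have p: "(2::int)^n = 2 * 2^(n-1)" using assms(1) by (cases n) auto
  have "card {t::int. 0 \<le> t \<and> t < 2^n \<and> t mod 2 = r} = nat (2^(n-1))"
    unfolding p by (rule card_res0) (use assms in auto)
  then show ?thesis by (simp add: nat_power_eq)
qed

lemma q_gt1: "n \<ge> 1 \<Longrightarrow> (2::int)^n > 1"
  by (rule one_less_power) auto

lemma adj_q_iff:
  assumes n: "n \<ge> 1" and a: "cls (2^n) N a \<in> verts (2^n) N G" and b: "cls (2^n) N b \<in> verts (2^n) N G"
  shows "adjacent (2^n) N G (cls (2^n) N a) (cls (2^n) N b) \<longleftrightarrow> odd (sf N (\<lambda>i j. G i j + G j i) a b)"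
proof -
  define q :: int where "q = 2^n"
  have q1: "q > 1" using q_gt1[OF n] by (simp add: q_def)
  have va: "a \<in> Vset q N" and vb: "b \<in> Vset q N" using vert_props a b q1 by (auto simp: q_def)
  show ?thesis
  proof
    assume "adjacent (2^n) N G (cls (2^n) N a) (cls (2^n) N b)"
    then obtain a' b' where a': "a' \<in> cls q N a" and b': "b' \<in> cls q N b"
      and cp: "coprime (form q N (\<lambda>i j. G i j + G j i) a' b') q"
      unfolding adjacent_def q_def by blast
    obtain c where c: "c \<in> units_mod q" "a' = smult q c a" using cls_sym[OF a' q1] by blast
    obtain d where d: "d \<in> units_mod q" "b' = smult q d b" using cls_sym[OF b' q1] by blast
    have "odd (sf N (\<lambda>i j. G i j + G j i) a' b')"
      using cp n by (simp add: form_sf q_def odd_mod_pow)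
    then have "odd (sf N (\<lambda>i j. G i j + G j i) a' b' mod q)"
      using odd_mod_pow[OF n, of "sf N (\<lambda>i j. G i j + G j i) a' b'"] by (simp add: q_def)
    then have "odd (c * d * sf N (\<lambda>i j. G i j + G j i) a b mod q)"
      using c(2) d(2) sf_smult by simp
    then have "odd (c * d * sf N (\<lambda>i j. G i j + G j i) a b)"
      using odd_mod_pow[OF n, of "c * d * sf N (\<lambda>i j. G i j + G j i) a b"] by (simp add: q_def)
    then show "odd (sf N (\<lambda>i j. G i j + G j i) a b)" by simp
  next
    assume o: "odd (sf N (\<lambda>i j. G i j + G j i) a b)"
    have "a \<in> cls q N a" "b \<in> cls q N b" using self_cls va vb q1 by auto
    moreover have "coprime (form q N (\<lambda>i j. G i j + G j i) a b) q"
      using o n by (simp add: form_sf q_def odd_mod_pow)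
    ultimately show "adjacent (2^n) N G (cls (2^n) N a) (cls (2^n) N b)"
      using a b unfolding adjacent_def q_def by blast
  qed
qed

lemma adj_2_iff:
  assumes "pi2 a \<in> Vset 2 N" "pi2 b \<in> Vset 2 N"
    "cls 2 N (pi2 a) \<in> verts 2 N G" "cls 2 N (pi2 b) \<in> verts 2 N G"
  shows "adjacent 2 N G (cls 2 N (pi2 a)) (cls 2 N (pi2 b)) \<longleftrightarrow> odd (sf N (\<lambda>i j. G i j + G j i) a b)"
proof -
  have "odd (sf N (\<lambda>i j. G i j + G j i) (pi2 a) (pi2 b)) \<longleftrightarrow> odd (sf N (\<lambda>i j. G i j + G j i) a b)"
    using sf_pi2[of N "\<lambda>i j. G i j + G j i" a b] by (simp add: cong_def odd_iff_mod_2_eq_one)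
  then show ?thesis using assms unfolding adjacent_def cls2[OF assms(1)] cls2[OF assms(2)]
    by (simp add: form_sf)
qed

lemma adj_2_props:
  assumes "adjacent 2 N G (cls 2 N (pi2 a)) (cls 2 N (pi2 b))"
  shows "pi2 a \<in> Vset 2 N" "pi2 b \<in> Vset 2 N" "odd (sf N (\<lambda>i j. G i j + G j i) a b)"
proof -
  have v: "cls 2 N (pi2 a) \<in> verts 2 N G" "cls 2 N (pi2 b) \<in> verts 2 N G"
    using assms unfolding adjacent_def by auto
  show a: "pi2 a \<in> Vset 2 N" "pi2 b \<in> Vset 2 N" using vert_props[OF v(1)] vert_props[OF v(2)] by auto
  show "odd (sf N (\<lambda>i j. G i j + G j i) a b)" using adj_2_iff[OF a v] assms by simp
qed

lemma part2:
  assumes n: "n \<ge> 1" and av: "a \<in> vecs (2^n) N" and bv: "b \<in> vecs (2^n) N"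
    and a: "cls (2^n) N a \<in> verts (2^n) N G" and b: "cls (2^n) N b \<in> verts (2^n) N G"
  shows "adjacent (2^n) N G (cls (2^n) N a) (cls (2^n) N b) \<longleftrightarrow>
     adjacent 2 N G (cls 2 N (pi2 a)) (cls 2 N (pi2 b))"
proof -
  have q1: "(2::int)^n > 1" using q_gt1[OF n] .
  have va: "a \<in> Vset (2^n) N" "sf N G a a mod 2^n = 0" using vert_props[OF a q1] by auto
  have vb: "b \<in> Vset (2^n) N" "sf N G b b mod 2^n = 0" using vert_props[OF b q1] by auto
  show ?thesis
    using adj_q_iff[OF n a b] adj_2_iff[OF pi2_Vset[OF n va(1)] pi2_Vset[OF n vb(1)]
        verts2[OF n va] verts2[OF n vb]] by simp
qed

lemma vadd_props: assumes n: "n \<ge> 1" and av: "a \<in> vecs (2^n) N" and m: "m \<in> evens (2^n) N"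
  shows "vadd (2^n) a m \<in> vecs (2^n) N" "pi2 (vadd (2^n) a m) = pi2 a"
proof -
  show "vadd (2^n) a m \<in> vecs (2^n) N" using av m unfolding vecs_def evens_def vadd_def by auto
  show "pi2 (vadd (2^n) a m) = pi2 a"
  proof
    fix i
    show "pi2 (vadd (2^n) a m) i = pi2 a i"
    proof (cases "i < N")
      case True
      then have "even (m i)" using m by (auto simp: evens_def)
      then have "(a i + m i) mod 2 = a i mod 2" by (metis add.commute mod_add_self2 dvd_def mod_mult_self4)
      then show ?thesis using mod2_pow[OF n] by (simp add: pi2_def vadd_def)
    next
      case False then show ?thesis using av m by (simp add: pi2_def vadd_def vecs_def evens_def)
    qed
  qed
qed

lemma part3:
  assumes n: "n \<ge> 1" and av: "a \<in> vecs (2^n) N" and bv: "b \<in> vecs (2^n) N"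
    and adj: "adjacent 2 N G (cls 2 N (pi2 a)) (cls 2 N (pi2 b))"
    and m1: "m1 \<in> evens (2^n) N" and m2: "m2 \<in> evens (2^n) N"
    and f1: "form (2^n) N G (vadd (2^n) a m1) (vadd (2^n) a m1) = 0"
    and f2: "form (2^n) N G (vadd (2^n) b m2) (vadd (2^n) b m2) = 0"
  shows "adjacent (2^n) N G (cls (2^n) N (vadd (2^n) a m1)) (cls (2^n) N (vadd (2^n) b m2))"
proof -
  define a1 where "a1 = vadd (2^n) a m1"
  define b1 where "b1 = vadd (2^n) b m2"
  note P = adj_2_props[OF adj]
  have a1: "a1 \<in> vecs (2^n) N" "pi2 a1 = pi2 a" using vadd_props[OF n av m1] by (auto simp: a1_def)
  have b1: "b1 \<in> vecs (2^n) N" "pi2 b1 = pi2 b" using vadd_props[OF n bv m2] by (auto simp: b1_def)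
  have a1V: "a1 \<in> Vset (2^n) N" using pi2_Vset_rev[OF n a1(1)] P(1) a1(2) by simp
  have b1V: "b1 \<in> Vset (2^n) N" using pi2_Vset_rev[OF n b1(1)] P(2) b1(2) by simp
  have va: "cls (2^n) N a1 \<in> verts (2^n) N G" using verts_I[OF a1V] f1 by (simp add: a1_def form_sf)
  have vb: "cls (2^n) N b1 \<in> verts (2^n) N G" using verts_I[OF b1V] f2 by (simp add: b1_def form_sf)
  have "[sf N (\<lambda>i j. G i j + G j i) a1 b1 = sf N (\<lambda>i j. G i j + G j i) a b] (mod 2)"
  proof (rule sf_cong)
    have "\<And>i. pi2 a1 i = pi2 a i" "\<And>i. pi2 b1 i = pi2 b i" using a1(2) b1(2) by simp_all
    then show "\<forall>i<N. [a1 i = a i] (mod 2)" "\<forall>j<N. [b1 j = b j] (mod 2)"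
      by (simp_all add: cong_def pi2_def)
  qed
  then have "odd (sf N (\<lambda>i j. G i j + G j i) a1 b1)" using P(3)
    by (simp add: cong_def odd_iff_mod_2_eq_one)
  then have "adjacent (2^n) N G (cls (2^n) N a1) (cls (2^n) N b1)" using adj_q_iff[OF n va vb] by blast
  then show ?thesis by (simp only: a1_def b1_def)
qed



lemma mod2_eq_iff: "(u::int) mod 2 = v mod 2 \<longleftrightarrow> (even u \<longleftrightarrow> even v)"
  by presburger

lemma part1:
  assumes n: "n \<ge> 1" and dl: "delta \<in> {0,1,2}" and oz: "odd z"
    and NN: "N = 2*nu + delta" and GG: "G = Gmat nu delta z"
    and av: "a \<in> vecs (2^n) N" and ca: "cls (2^n) N a \<in> verts (2^n) N G"
  shows "card {B \<in> verts (2^n) N G. \<exists>b \<in> B. cls 2 N (pi2 a) = cls 2 N (pi2 b)}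
         = 2 ^ ((n - 1) * (N - 2))"
proof -
  define q :: int where "q = 2^n"
  have q1: "q > 1" using q_gt1[OF n] by (simp add: q_def)
  have QG: "\<And>x. sf N G x x = Qc nu delta z x" using sf_Gmat[OF dl NN] GG by simp
  have aV: "a \<in> Vset q N" and aQ: "sf N G a a mod q = 0" using vert_props[OF ca] q1 by (auto simp: q_def)
  have evQa: "even (Qc nu delta z a)"
    using aQ mod2_pow[OF n, of "Qc nu delta z a"] by (simp add: QG q_def even_iff_mod_2_eq_zero)
  have "\<exists>i<N. odd (a i)" using aV n by (auto simp: Vset_def q_def)
  then obtain j where j: "j < 2*nu" "odd (a j)" using odd_index[OF dl NN oz _ evQa] by blast
  define k where "k = (if j < nu then nu + j else j - nu)"
  have k: "k < 2*nu" "k \<noteq> j" "j = (if k < nu then nu + k else k - nu)" using j(1) by (auto simp: k_def)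
  have kN: "k < N" and jN: "j < N" using k j NN by auto
  have upd: "\<And>x t. Qc nu delta z (x(k:=t)) = t * x j + Qc nu delta z (x(k:=0))"
    using Qc_upd[OF k(1) k(3)] by blast
  define T where "T = {x \<in> vecs q N. pi2 x = pi2 a \<and> x j = 1 \<and> Qc nu delta z x mod q = 0}"
  define U where "U = {y \<in> vecs q N. (\<forall>i<N. i \<noteq> k \<longrightarrow> y i mod 2 = a i mod 2) \<and> y k = 0 \<and> y j = 1}"
  define Cl where "Cl = {B \<in> verts (2^n) N G. \<exists>b \<in> B. cls 2 N (pi2 a) = cls 2 N (pi2 b)}"
  have TV: "x \<in> Vset q N" if "x \<in> T" for x
    using that jN q1 unfolding T_def Vset_def by auto
  have pa: "pi2 a \<in> Vset 2 N" using pi2_Vset[OF n] aV by (simp add: q_def)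

  have A: "Cl = cls q N ` T"
  proof (intro equalityI subsetI)
    fix B assume "B \<in> Cl"
    then obtain b where Bv: "B \<in> verts q N G" and bB: "b \<in> B" and e2: "cls 2 N (pi2 a) = cls 2 N (pi2 b)"
      unfolding Cl_def q_def by blast
    obtain y where y: "y \<in> Vset q N" "B = cls q N y" using Bv unfolding verts_def by blast
    have cb: "cls q N b = B" using cls_eq[OF _ q1] bB y(2) by blast
    have bV: "b \<in> Vset q N" and bQ: "sf N G b b mod q = 0" using vert_props[of q N b G] Bv cb q1 by auto
    have pb: "pi2 b \<in> Vset 2 N" using pi2_Vset[OF n] bV by (simp add: q_def)
    have pab: "pi2 a = pi2 b" using e2 cls2[OF pa] cls2[OF pb] by simp
    have "b j mod 2 = 1" using fun_cong[OF pab, of j] j(2) by (simp add: pi2_def odd_iff_mod_2_eq_one)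
    then have "b j \<in> units_mod q" using bV jN n
      by (auto simp: units_mod_def Vset_def vecs_def q_def odd_iff_mod_2_eq_one)
    then obtain d where d: "d \<in> units_mod q" "(d * b j) mod q = 1" using units_inv q1 by blast
    define x where "x = smult q d b"
    have xV: "x \<in> Vset q N" using smult_Vset[OF bV d(1) q1] by (simp add: x_def)
    have od: "odd d" using d(1) n by (simp add: units_mod_def q_def)
    have "pi2 x = pi2 b"
    proof
      fix i
      have "(d * b i) mod q mod 2 = (d * b i) mod 2" using mod2_pow[OF n] by (simp add: q_def)
      also have "\<dots> = b i mod 2" using odd_mul_mod2[OF od] .
      finally show "pi2 x i = pi2 b i" by (simp add: pi2_def x_def smult_def)
    qed
    then have px: "pi2 x = pi2 a" using pab by simp
    have xj: "x j = 1" using d(2) by (simp add: x_def smult_def)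
    have "sf N G x x mod q = d * d * sf N G b b mod q" using sf_smult by (simp add: x_def)
    also have "\<dots> = d * d * (sf N G b b mod q) mod q" by (simp add: mod_mult_right_eq)
    finally have xQ: "sf N G x x mod q = 0" using bQ by simp
    have "b \<in> cls q N x" using bV d(1) unfolding cls_def x_def by blast
    then have "cls q N b = cls q N x" using cls_eq[OF _ q1] by blast
    moreover have "x \<in> T" using xV px xj xQ QG unfolding T_def Vset_def by auto
    ultimately show "B \<in> cls q N ` T" using cb by blast
  next
    fix B assume "B \<in> cls q N ` T"
    then obtain x where x: "x \<in> T" "B = cls q N x" by blast
    have xV: "x \<in> Vset q N" using TV x(1) .
    have "sf N G x x mod q = 0" using x(1) QG unfolding T_def by auto
    then have "B \<in> verts q N G" using verts_I[OF xV] x(2) by simp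
    moreover have "x \<in> B" using self_cls[OF xV q1] x(2) by simp
    moreover have "pi2 x = pi2 a" using x(1) unfolding T_def by auto
    ultimately have "\<exists>b\<in>B. cls 2 N (pi2 a) = cls 2 N (pi2 b)" by (intro bexI[of _ x]) simp_all
    then show "B \<in> Cl" using \<open>B \<in> verts q N G\<close> unfolding Cl_def q_def by blast
  qed

  have B: "inj_on (cls q N) T"
  proof (rule inj_onI)
    fix x y assume x: "x \<in> T" and y: "y \<in> T" and e: "cls q N x = cls q N y"
    have "x \<in> cls q N y" using self_cls[OF TV[OF x] q1] e by simp
    then obtain c where c: "c \<in> units_mod q" "y = smult q c x" by (auto simp: cls_def)
    have "y j = c mod q" using c(2) x unfolding T_def smult_def by simp
    then have "c = 1" using c(1) y unfolding T_def units_mod_def by auto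
    then show "x = y" using c(2) smult_1[of x q N] x unfolding T_def by simp
  qed

  have C: "bij_betw (\<lambda>x. x(k:=0)) T U"
  proof (rule bij_betw_byWitness[where f' = "\<lambda>y. y(k := (- Qc nu delta z y) mod q)"])
    show "\<forall>x\<in>T. (x(k:=0))(k := (- Qc nu delta z (x(k:=0))) mod q) = x"
    proof
      fix x assume x: "x \<in> T"
      have "Qc nu delta z x = x k * x j + Qc nu delta z (x(k:=0))" using upd[of x "x k"] by simp
      then have "Qc nu delta z x = x k + Qc nu delta z (x(k:=0))" using x unfolding T_def by simp
      then have "q dvd (x k - (- Qc nu delta z (x(k:=0))))" using x unfolding T_def by auto
      then have "x k mod q = (- Qc nu delta z (x(k:=0))) mod q" using mod_eq_dvd_iff by blast
      moreover have "x k mod q = x k" using x kN unfolding T_def vecs_def by auto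
      ultimately show "(x(k:=0))(k := (- Qc nu delta z (x(k:=0))) mod q) = x" by auto
    qed
    show "\<forall>y\<in>U. (y(k := (- Qc nu delta z y) mod q))(k:=0) = y"
      unfolding U_def by auto
    show "(\<lambda>x. x(k:=0)) ` T \<subseteq> U"
    proof
      fix w assume "w \<in> (\<lambda>x. x(k:=0)) ` T"
      then obtain x where x: "x \<in> T" "w = x(k:=0)" by blast
      have "\<And>i. x i mod 2 = a i mod 2" using x(1) unfolding T_def pi2_def by (auto simp: fun_eq_iff)
      then show "w \<in> U" using x kN q1 k(2) unfolding T_def U_def vecs_def by auto
    qed
    show "(\<lambda>y. y(k := (- Qc nu delta z y) mod q)) ` U \<subseteq> T"
    proof
      fix w assume "w \<in> (\<lambda>y. y(k := (- Qc nu delta z y) mod q)) ` U"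
      then obtain y where y: "y \<in> U" "w = y(k := (- Qc nu delta z y) mod q)" by blast
      define t where "t = (- Qc nu delta z y) mod q"
      have yk: "y(k:=0) = y" using y(1) unfolding U_def by auto
      have yj: "y j = 1" using y(1) unfolding U_def by auto
      have wv: "w \<in> vecs q N" using y kN q1 unfolding U_def vecs_def by auto
      have wj: "w j = 1" using y k(2) yj by simp
      have "Qc nu delta z w = t * y j + Qc nu delta z (y(k:=0))" using upd[of y t] y(2) t_def by simp
      then have "Qc nu delta z w = t + Qc nu delta z y" using yk yj by simp
      then have wQ: "Qc nu delta z w mod q = 0" unfolding t_def by (simp add: mod_add_left_eq)
      have "[sf N G y y = sf N G (a(k:=0)) (a(k:=0))] (mod 2)"
        by (rule sf_cong) (use y(1) in \<open>auto simp: U_def cong_def\<close>)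
      then have e1: "even (Qc nu delta z y) \<longleftrightarrow> even (Qc nu delta z (a(k:=0)))"
        by (simp add: QG cong_def mod2_eq_iff)
      have e2: "Qc nu delta z a = a k * a j + Qc nu delta z (a(k:=0))" using upd[of a "a k"] by simp
      have "(- Qc nu delta z y) mod 2 = a k mod 2"
        unfolding mod2_eq_iff using e1 e2 evQa j(2) by auto
      then have "t mod 2 = a k mod 2" using mod2_pow[OF n] by (simp add: t_def q_def)
      then have tk: "t mod 2 = a k mod 2" .
      have "pi2 w = pi2 a"
      proof
        fix i show "pi2 w i = pi2 a i"
        proof (cases "i = k")
          case True then show ?thesis using tk y(2) by (simp add: pi2_def t_def)
        next
          case False
          show ?thesis
          proof (cases "i < N")
            case True then show ?thesis using False y unfolding U_def pi2_def by auto
          next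
            case nN: False then show ?thesis using False y av unfolding U_def pi2_def vecs_def by auto
          qed
        qed
      qed
      then show "w \<in> T" using wv wj wQ unfolding T_def by auto
    qed
  qed

  define D where "D = {..<N} - {k, j}"
  define Ef where "Ef = (\<lambda>i. {t::int. 0 \<le> t \<and> t < 2^n \<and> t mod 2 = a i mod 2})"
  have Dd: "bij_betw (\<lambda>y. restrict y D) U (PiE D Ef)"
  proof (rule bij_betw_byWitness[where f' = "\<lambda>f i. if i \<in> D then f i else if i = j then 1 else 0"])
    show "\<forall>y\<in>U. (\<lambda>i. if i \<in> D then restrict y D i else if i = j then 1 else 0) = y"
    proof
      fix y assume y: "y \<in> U"
      show "(\<lambda>i. if i \<in> D then restrict y D i else if i = j then 1 else 0) = y"
      proof
        fix i show "(if i \<in> D then restrict y D i else if i = j then 1 else 0) = y i"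
          using y unfolding U_def D_def vecs_def by auto
      qed
    qed
    show "\<forall>f\<in>PiE D Ef. restrict (\<lambda>i. if i \<in> D then f i else if i = j then 1 else 0) D = f"
    proof
      fix f assume f: "f \<in> PiE D Ef"
      show "restrict (\<lambda>i. if i \<in> D then f i else if i = j then 1 else 0) D = f"
      proof
        fix i show "restrict (\<lambda>i. if i \<in> D then f i else if i = j then 1 else 0) D i = f i"
          using f by (cases "i \<in> D") (auto simp: PiE_def extensional_def)
      qed
    qed
    show "(\<lambda>y. restrict y D) ` U \<subseteq> PiE D Ef"
    proof
      fix w assume "w \<in> (\<lambda>y. restrict y D) ` U"
      then obtain y where y: "y \<in> U" "w = restrict y D" by blast
      have "\<forall>i\<in>D. y i \<in> Ef i" using y(1) unfolding U_def D_def Ef_def vecs_def q_def by auto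
      then show "w \<in> PiE D Ef" using y(2) by (simp add: restrict_PiE_iff)
    qed
    show "(\<lambda>f i. if i \<in> D then f i else if i = j then 1 else 0) ` PiE D Ef \<subseteq> U"
    proof
      fix w assume "w \<in> (\<lambda>f i. if i \<in> D then f i else if i = j then 1 else 0) ` PiE D Ef"
      then obtain f where f: "f \<in> PiE D Ef" "w = (\<lambda>i. if i \<in> D then f i else if i = j then 1 else 0)" by blast
      have fi: "\<And>i. i \<in> D \<Longrightarrow> 0 \<le> f i \<and> f i < q \<and> f i mod 2 = a i mod 2"
        using f(1) unfolding Ef_def q_def by auto
      have "a j mod 2 = 1" using j(2) by (simp add: odd_iff_mod_2_eq_one)
      have jD: "j \<notin> D" and kD: "k \<notin> D" unfolding D_def by auto
      have w1: "\<forall>i<N. 0 \<le> w i \<and> w i < q"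
      proof (intro allI impI)
        fix i assume "i < N"
        show "0 \<le> w i \<and> w i < q"
          using fi[of i] q1 f(2) by (cases "i \<in> D"; cases "i = j") auto
      qed
      have w2: "\<forall>i. N \<le> i \<longrightarrow> w i = 0" using f(2) jN unfolding D_def by auto
      have w3: "\<forall>i<N. i \<noteq> k \<longrightarrow> w i mod 2 = a i mod 2"
      proof (intro allI impI)
        fix i assume "i < N" "i \<noteq> k"
        then have "i \<in> D \<or> i = j" unfolding D_def by auto
        then show "w i mod 2 = a i mod 2"
          using fi[of i] f(2) jD \<open>a j mod 2 = 1\<close> by auto
      qed
      have w4: "w k = 0" "w j = 1" using f(2) jD kD k(2) by auto
      show "w \<in> U" using w1 w2 w3 w4 unfolding U_def vecs_def by blast
    qed
  qed
  have c2: "card {k, j} = 2" using k(2) by simp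
  have cD: "card D = N - 2" unfolding D_def using kN jN c2 by (subst card_Diff_subset) auto
  have cE: "card (Ef i) = 2^(n-1)" for i
  proof -
    have "a i mod 2 = 0 \<or> a i mod 2 = 1" by presburger
    then have "a i mod 2 \<in> {0,1}" by blast
    then show ?thesis unfolding Ef_def by (rule card_res[OF n])
  qed
  have fD: "finite D" unfolding D_def by simp
  have "card (PiE D Ef) = (\<Prod>i\<in>D. card (Ef i))" by (rule card_PiE[OF fD])
  also have "\<dots> = (\<Prod>i\<in>D. 2^(n-1))" using cE by simp
  also have "\<dots> = (2^(n-1))^(N-2)" using cD by simp
  also have "\<dots> = 2^((n-1)*(N-2))" by (simp add: power_mult)
  finally have cP: "card (PiE D Ef) = 2^((n-1)*(N-2))" .
  have "card Cl = card T" using A card_image[OF B] by simp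
  also have "\<dots> = card U" using bij_betw_same_card[OF C] .
  also have "\<dots> = card (PiE D Ef)" using bij_betw_same_card[OF Dd] .
  finally show ?thesis using cP unfolding Cl_def by simp
qed


theorem lemma2p2:
  fixes n nu delta :: nat and z :: int
  assumes "n \<ge> 1" and "nu \<ge> 1" and "delta \<in> {0, 1, 2}"
    and "z \<in> units_mod (2 ^ n)"
  defines "N \<equiv> 2 * nu + delta" and "q \<equiv> (2::int) ^ n" and "G \<equiv> Gmat nu delta z"
  shows
   "(\<forall>a \<in> vecs q N. cls q N a \<in> verts q N G \<longrightarrow>
       card {B \<in> verts q N G. \<exists>b \<in> B. cls 2 N (pi2 a) = cls 2 N (pi2 b)}
         = 2 ^ ((n - 1) * (N - 2)))
    \<and> (\<forall>a \<in> vecs q N. \<forall>b \<in> vecs q N.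
         cls q N a \<in> verts q N G \<longrightarrow> cls q N b \<in> verts q N G \<longrightarrow>
         (adjacent q N G (cls q N a) (cls q N b) \<longleftrightarrow>
          adjacent 2 N G (cls 2 N (pi2 a)) (cls 2 N (pi2 b))))
    \<and> (\<forall>a \<in> vecs q N. \<forall>b \<in> vecs q N.
         adjacent 2 N G (cls 2 N (pi2 a)) (cls 2 N (pi2 b)) \<longrightarrow>
         (\<forall>m1 \<in> evens q N. \<forall>m2 \<in> evens q N.
            form q N G (vadd q a m1) (vadd q a m1) = 0 \<longrightarrow>
            form q N G (vadd q b m2) (vadd q b m2) = 0 \<longrightarrow>
            adjacent q N G (cls q N (vadd q a m1)) (cls q N (vadd q b m2))))"
  proof -
  have n: "n \<ge> 1" by (rule assms(1))
  have oz: "odd z" using assms(4) n by (simp add: units_mod_def)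
  have NN: "N = 2*nu + delta" by (simp add: N_def)
  have GG: "G = Gmat nu delta z" by (simp add: G_def)
  have P1: "\<forall>a \<in> vecs q N. cls q N a \<in> verts q N G \<longrightarrow>
       card {B \<in> verts q N G. \<exists>b \<in> B. cls 2 N (pi2 a) = cls 2 N (pi2 b)}
         = 2 ^ ((n - 1) * (N - 2))"
    unfolding q_def using part1[OF n assms(3) oz NN GG] by blast
  have P2: "\<forall>a \<in> vecs q N. \<forall>b \<in> vecs q N.
         cls q N a \<in> verts q N G \<longrightarrow> cls q N b \<in> verts q N G \<longrightarrow>
         (adjacent q N G (cls q N a) (cls q N b) \<longleftrightarrow>
          adjacent 2 N G (cls 2 N (pi2 a)) (cls 2 N (pi2 b)))"
    unfolding q_def using part2[OF n] by blast
  have P3: "\<forall>a \<in> vecs q N. \<forall>b \<in> vecs q N.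
         adjacent 2 N G (cls 2 N (pi2 a)) (cls 2 N (pi2 b)) \<longrightarrow>
         (\<forall>m1 \<in> evens q N. \<forall>m2 \<in> evens q N.
            form q N G (vadd q a m1) (vadd q a m1) = 0 \<longrightarrow>
            form q N G (vadd q b m2) (vadd q b m2) = 0 \<longrightarrow>
            adjacent q N G (cls q N (vadd q a m1)) (cls q N (vadd q b m2)))"
    unfolding q_def using part3[OF n] by blast
  show ?thesis using P1 P2 P3 by blast
qed

end
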